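(* For the hypergeometric moment matrix $\mathscr M$ described in the context, for $a\in\{1,2\}$, $i\in\{1,\dots,M^{(a)}\}$ and $j\in\{1,\dots,N\}$, \[ \mathscr M{\Lambda^{(a)}}^\top+b^{(a)}_i\mathscr M=b^{(a)}_i\,{}_i\Theta^{(a)}\mathscr M,\qquad \mathscr M(\Lambda^2)^\top+(c_j-1)\mathscr M=(c_j-1)\,\Theta_j\mathscr M. \]
   Context: Fix parameters $b^{(a)}_i$, $c_j$, $\eta^{(a)}$ and the weights $w^{(a)}(k)=\frac{(b^{(a)}_1)_k\cdots(b^{(a)}_{M^{(a)}})_k}{(c_1)_k\cdots(c_N)_k}\frac{(\eta^{(a)})^k}{k!}$ on $\mathbb N_0$, $a\in\{1,2\}$, with all series below convergent. The moment matrix $\mathscr M$ (indices from 0) has entries $\mathscr M_{n,2m}=\sum_k k^{n+m}w^{(1)}(k)$, $\mathscr M_{n,2m+1}=\sum_k k^{n+m}w^{(2)}(k)$, regarded as a function of the parameters. $\Lambda$ has ones on the first superdiagonal, $I^{(1)}=\operatorname{diag}(1,0,1,0,\dots)$, $I^{(2)}=\operatorname{diag}(0,1,0,1,\dots)$, $\Lambda^{(a)}=\Lambda^2I^{(a)}$. The operator ${}_i\Theta^{(a)}$ replaces the parameter $b^{(a)}_i$ by $b^{(a)}_i+1$ (other parameters fixed), and $\Theta_j$ replaces $c_j$ by $c_j-1$. *)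

theory Defs
  imports "HOL-Analysis.Analysis"
begin

text \<open>Parameters: b a i = b^(a)_i (a in {1,2}, i in {1..Mp a}), c j = c_j (j in {1..N}),
  eta a = eta^(a). All parameters are complex numbers.\<close>

definition hw :: "(nat \<Rightarrow> complex) \<Rightarrow> nat \<Rightarrow> (nat \<Rightarrow> complex) \<Rightarrow> nat \<Rightarrow> complex \<Rightarrow> nat \<Rightarrow> complex" where
  "hw bs Mb cs N eta k =
     (\<Prod>i=1..Mb. pochhammer (bs i) k) / (\<Prod>j=1..N. pochhammer (cs j) k)
     * eta ^ k / of_nat (fact k)"

definition wgt :: "(nat \<Rightarrow> nat \<Rightarrow> complex) \<Rightarrow> (nat \<Rightarrow> nat) \<Rightarrow> (nat \<Rightarrow> complex) \<Rightarrow> nat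
                   \<Rightarrow> (nat \<Rightarrow> complex) \<Rightarrow> nat \<Rightarrow> nat \<Rightarrow> complex" where
  "wgt b Mp c N eta a k = hw (b a) (Mp a) c N (eta a) k"

definition moment :: "(nat \<Rightarrow> nat \<Rightarrow> complex) \<Rightarrow> (nat \<Rightarrow> nat) \<Rightarrow> (nat \<Rightarrow> complex) \<Rightarrow> nat
                   \<Rightarrow> (nat \<Rightarrow> complex) \<Rightarrow> nat \<Rightarrow> nat \<Rightarrow> complex" where
  "moment b Mp c N eta n m =
     (if even m
      then (\<Sum>\<^sub>\<infinity>k. of_nat k ^ (n + m div 2) * wgt b Mp c N eta 1 k)
      else (\<Sum>\<^sub>\<infinity>k. of_nat k ^ (n + m div 2) * wgt b Mp c N eta 2 k))"

definition moments_converge :: "(nat \<Rightarrow> nat \<Rightarrow> complex) \<Rightarrow> (nat \<Rightarrow> nat) \<Rightarrow> (nat \<Rightarrow> complex) \<Rightarrow> nat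
                   \<Rightarrow> (nat \<Rightarrow> complex) \<Rightarrow> bool" where
  "moments_converge b Mp c N eta \<longleftrightarrow>
     (\<forall>a\<in>{1,2}. \<forall>n. (\<lambda>k. of_nat k ^ n * wgt b Mp c N eta a k) summable_on UNIV)"

definition shift_b :: "nat \<Rightarrow> nat \<Rightarrow> (nat \<Rightarrow> nat \<Rightarrow> complex) \<Rightarrow> (nat \<Rightarrow> nat \<Rightarrow> complex)" where
  "shift_b a i b = b(a := (b a)(i := b a i + 1))"

definition shift_c :: "nat \<Rightarrow> (nat \<Rightarrow> complex) \<Rightarrow> (nat \<Rightarrow> complex)" where
  "shift_c j c = c(j := c j - 1)"

type_synonym mat = "nat \<Rightarrow> nat \<Rightarrow> complex"

definition mmul :: "mat \<Rightarrow> mat \<Rightarrow> mat" where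
  "mmul A B = (\<lambda>n m. \<Sum>\<^sub>\<infinity>l. A n l * B l m)"

definition madd :: "mat \<Rightarrow> mat \<Rightarrow> mat" where
  "madd A B = (\<lambda>n m. A n m + B n m)"

definition msc :: "complex \<Rightarrow> mat \<Rightarrow> mat" where
  "msc s A = (\<lambda>n m. s * A n m)"

definition mtr :: "mat \<Rightarrow> mat" where
  "mtr A = (\<lambda>n m. A m n)"

definition Lam :: mat where
  "Lam = (\<lambda>r s. if s = Suc r then 1 else 0)"

definition Idg :: "nat \<Rightarrow> mat" where
  "Idg a = (\<lambda>r s. if r = s \<and> (if a = 1 then even r else odd r) then 1 else 0)"

definition LamA :: "nat \<Rightarrow> mat" where
  "LamA a = mmul (mmul Lam Lam) (Idg a)"

end

theory Submission
  imports Defs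
begin

lemma infsum_single_pt:
  "infsum (\<lambda>x::nat. if x = y then (g::complex) else 0) UNIV = g"
proof -
  have "infsum (\<lambda>x::nat. if x = y then g else 0) UNIV = infsum (\<lambda>x. if x = y then g else 0) {y}"
    by (rule infsum_cong_neutral) auto
  also have "\<dots> = g" by simp
  finally show ?thesis .
qed

lemma Lam2: "mmul Lam Lam = (\<lambda>r s. if s = r + 2 then 1 else 0)"
proof (intro ext)
  fix r s
  have "mmul Lam Lam r s = infsum (\<lambda>l. if l = Suc r then (if s = Suc (Suc r) then 1 else 0) else 0) UNIV"
    unfolding mmul_def Lam_def by (intro infsum_cong) auto
  also have "\<dots> = (if s = r + 2 then 1 else 0)" by (simp add: infsum_single_pt)
  finally show "mmul Lam Lam r s = (if s = r + 2 then 1 else 0)" .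
qed

lemma LamA_eq: "LamA a = (\<lambda>r s. if s = r + 2 \<and> (if a = 1 then even s else odd s) then 1 else 0)"
proof (intro ext)
  fix r s
  have "LamA a r s = infsum (\<lambda>l. if l = r + 2 then (if s = r + 2 \<and> (if a = 1 then even s else odd s) then 1 else 0) else 0) UNIV"
    unfolding LamA_def Lam2 by (unfold Idg_def mmul_def) (intro infsum_cong, auto)
  also have "\<dots> = (if s = r + 2 \<and> (if a = 1 then even s else odd s) then 1 else 0)" by (simp add: infsum_single_pt)
  finally show "LamA a r s = (if s = r + 2 \<and> (if a = 1 then even s else odd s) then 1 else 0)" .
qed

lemma mmul_shift:
  "mmul A (mtr (\<lambda>r s. if s = r + 2 \<and> P s then 1 else 0)) = (\<lambda>n m. if P (m + 2) then A n (m + 2) else 0)"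
proof (intro ext)
  fix n m
  have "mmul A (mtr (\<lambda>r s. if s = r + 2 \<and> P s then 1 else 0)) n m
      = infsum (\<lambda>l. if l = m + 2 then (if P (m+2) then A n (m + 2) else 0) else 0) UNIV"
    unfolding mmul_def mtr_def by (intro infsum_cong) auto
  also have "\<dots> = (if P (m + 2) then A n (m + 2) else 0)" by (simp add: infsum_single_pt)
  finally show "mmul A (mtr (\<lambda>r s. if s = r + 2 \<and> P s then 1 else 0)) n m = (if P (m + 2) then A n (m + 2) else 0)" .
qed

lemma moment_eq:
  "moment b Mp c N eta n m = infsum (\<lambda>k. of_nat k ^ (n + m div 2) * wgt b Mp c N eta (if even m then 1 else 2) k) UNIV"
  unfolding moment_def by simp

lemma wgt_shift_b_same:
  assumes "i \<in> {1..Mp a}"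
  shows "b a i * wgt (shift_b a i b) Mp c N eta a k = (b a i + of_nat k) * wgt b Mp c N eta a k"
proof -
  let ?S = "{1..Mp a} - {i}"
  have fin: "finite {1..Mp a}" by simp
  have P1: "(\<Prod>i'=1..Mp a. pochhammer (shift_b a i b a i') k)
      = pochhammer (b a i + 1) k * (\<Prod>i'\<in>?S. pochhammer (b a i') k)"
  proof -
    have "(\<Prod>i'=1..Mp a. pochhammer (shift_b a i b a i') k)
        = pochhammer (shift_b a i b a i) k * (\<Prod>i'\<in>?S. pochhammer (shift_b a i b a i') k)"
      using prod.remove[OF fin assms] by blast
    also have "(\<Prod>i'\<in>?S. pochhammer (shift_b a i b a i') k) = (\<Prod>i'\<in>?S. pochhammer (b a i') k)"
      by (intro prod.cong) (auto simp: shift_b_def)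
    finally show ?thesis by (simp add: shift_b_def)
  qed
  have P2: "(\<Prod>i'=1..Mp a. pochhammer (b a i') k)
      = pochhammer (b a i) k * (\<Prod>i'\<in>?S. pochhammer (b a i') k)"
    using prod.remove[OF fin assms] by blast
  have key: "b a i * pochhammer (b a i + 1) k = (b a i + of_nat k) * pochhammer (b a i) k"
    using pochhammer_rec[of "b a i" k] pochhammer_rec'[of "b a i" k] by simp
  define X where "X = (\<Prod>i'\<in>?S. pochhammer (b a i') k) / (\<Prod>j=1..N. pochhammer (c j) k) * eta a ^ k / of_nat (fact k)"
  have "b a i * wgt (shift_b a i b) Mp c N eta a k = (b a i * pochhammer (b a i + 1) k) * X"
    unfolding wgt_def hw_def P1 X_def by (simp add: shift_b_def)
  also have "\<dots> = ((b a i + of_nat k) * pochhammer (b a i) k) * X" by (simp only: key)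
  also have "\<dots> = (b a i + of_nat k) * wgt b Mp c N eta a k"
    unfolding wgt_def hw_def P2 X_def by simp
  finally show ?thesis .
qed

lemma wgt_shift_b_other:
  assumes "a' \<noteq> a"
  shows "wgt (shift_b a i b) Mp c N eta a' k = wgt b Mp c N eta a' k"
  using assms unfolding wgt_def shift_b_def by simp

lemma wgt_shift_c:
  assumes "j \<in> {1..N}" and "\<forall>k::nat. c j \<noteq> - of_nat k" and "\<forall>k::nat. c j - 1 \<noteq> - of_nat k"
  shows "(c j - 1) * wgt b Mp (shift_c j c) N eta a k = (c j - 1 + of_nat k) * wgt b Mp c N eta a k"
proof -
  let ?S = "{1..N} - {j}"
  have fin: "finite {1..N}" by simp
  have Q1: "(\<Prod>j'=1..N. pochhammer (shift_c j c j') k)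
      = pochhammer (c j - 1) k * (\<Prod>j'\<in>?S. pochhammer (c j') k)"
  proof -
    have "(\<Prod>j'=1..N. pochhammer (shift_c j c j') k)
        = pochhammer (shift_c j c j) k * (\<Prod>j'\<in>?S. pochhammer (shift_c j c j') k)"
      using prod.remove[OF fin assms(1)] by blast
    also have "(\<Prod>j'\<in>?S. pochhammer (shift_c j c j') k) = (\<Prod>j'\<in>?S. pochhammer (c j') k)"
      by (intro prod.cong) (auto simp: shift_c_def)
    finally show ?thesis by (simp add: shift_c_def)
  qed
  have Q2: "(\<Prod>j'=1..N. pochhammer (c j') k)
      = pochhammer (c j) k * (\<Prod>j'\<in>?S. pochhammer (c j') k)"
    using prod.remove[OF fin assms(1)] by blast
  have nz1: "pochhammer (c j) k \<noteq> 0"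
    using assms(2) by (auto simp: pochhammer_eq_0_iff)
  have nz2: "pochhammer (c j - 1) k \<noteq> 0"
    using assms(3) by (auto simp: pochhammer_eq_0_iff)
  have key: "(c j - 1) * pochhammer (c j) k = (c j - 1 + of_nat k) * pochhammer (c j - 1) k"
    using pochhammer_rec[of "c j - 1" k] pochhammer_rec'[of "c j - 1" k] by simp
  have key2: "(c j - 1) / pochhammer (c j - 1) k = (c j - 1 + of_nat k) / pochhammer (c j) k"
    using key nz1 nz2 by (simp add: field_simps)
  define R where "R = (\<Prod>j'\<in>?S. pochhammer (c j') k)"
  define T where "T = (\<Prod>i=1..Mp a. pochhammer (b a i) k) * eta a ^ k / of_nat (fact k)"
  have "(c j - 1) * wgt b Mp (shift_c j c) N eta a k = ((c j - 1) / pochhammer (c j - 1) k) * (T / R)"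
    unfolding wgt_def hw_def Q1 T_def R_def by (simp add: field_simps)
  also have "\<dots> = ((c j - 1 + of_nat k) / pochhammer (c j) k) * (T / R)" by (simp add: key2)
  also have "\<dots> = (c j - 1 + of_nat k) * wgt b Mp c N eta a k"
    unfolding wgt_def hw_def Q2 T_def R_def by (simp add: field_simps)
  finally show ?thesis .
qed

lemma combine:
  fixes f g :: "nat \<Rightarrow> complex"
  assumes "f summable_on UNIV" "g summable_on UNIV"
  shows "infsum f UNIV + s * infsum g UNIV = infsum (\<lambda>k. f k + s * g k) UNIV"
proof -
  have "(\<lambda>k. s * g k) summable_on UNIV" using assms(2) by (rule summable_on_cmult_right)
  then have "infsum (\<lambda>k. f k + s * g k) UNIV = infsum f UNIV + infsum (\<lambda>k. s * g k) UNIV"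
    using assms(1) by (rule infsum_add[rotated])
  then show ?thesis by (simp add: infsum_cmult_right')
qed

theorem mainTheorem8:
  fixes b :: "nat \<Rightarrow> nat \<Rightarrow> complex" and Mp :: "nat \<Rightarrow> nat"
    and c :: "nat \<Rightarrow> complex" and N :: nat and eta :: "nat \<Rightarrow> complex"
    and a i j :: nat
  assumes "a \<in> {1, 2}" and "i \<in> {1..Mp a}" and "j \<in> {1..N}"
    and "\<forall>j'\<in>{1..N}. \<forall>k::nat. c j' \<noteq> - of_nat k"
    and "\<forall>k::nat. c j - 1 \<noteq> - of_nat k"
    and "moments_converge b Mp c N eta"
    and "moments_converge (shift_b a i b) Mp c N eta"
    and "moments_converge b Mp (shift_c j c) N eta"
  shows "madd (mmul (moment b Mp c N eta) (mtr (LamA a))) (msc (b a i) (moment b Mp c N eta))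
           = msc (b a i) (moment (shift_b a i b) Mp c N eta)
       \<and> madd (mmul (moment b Mp c N eta) (mtr (mmul Lam Lam))) (msc (c j - 1) (moment b Mp c N eta))
           = msc (c j - 1) (moment b Mp (shift_c j c) N eta)"
proof
  define W where "W = wgt b Mp c N eta"
  have summ: "\<And>a' p. a' \<in> {1,2} \<Longrightarrow> (\<lambda>k. of_nat k ^ p * W a' k) summable_on UNIV"
    using assms(6) unfolding moments_converge_def W_def by blast
  have cj: "\<forall>k::nat. c j \<noteq> - of_nat k" using assms(3,4) by blast
  have m2: "\<And>n m. moment b Mp c N eta n (m + 2) = infsum (\<lambda>k. of_nat k ^ Suc (n + m div 2) * W (if even m then 1 else 2) k) UNIV"
    unfolding moment_eq W_def by simp
  show "madd (mmul (moment b Mp c N eta) (mtr (LamA a))) (msc (b a i) (moment b Mp c N eta))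
           = msc (b a i) (moment (shift_b a i b) Mp c N eta)"
  proof (intro ext)
    fix n m :: nat
    define a' :: nat where "a' = (if even m then 1 else 2)"
    define p where "p = n + m div 2"
    have a'12: "a' \<in> {1,2}" unfolding a'_def by simp
    have Pm: "(if a = 1 then even (m + 2) else odd (m + 2)) \<longleftrightarrow> a' = a"
      using assms(1) unfolding a'_def by auto
    have lhs: "madd (mmul (moment b Mp c N eta) (mtr (LamA a))) (msc (b a i) (moment b Mp c N eta)) n m
      = (if a' = a then infsum (\<lambda>k. of_nat k ^ Suc p * W a' k) UNIV else 0)
        + b a i * infsum (\<lambda>k. of_nat k ^ p * W a' k) UNIV"
      unfolding madd_def msc_def LamA_eq mmul_shift Pm m2
      by (simp add: moment_eq W_def a'_def p_def)
    have rhs: "msc (b a i) (moment (shift_b a i b) Mp c N eta) n m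
      = b a i * infsum (\<lambda>k. of_nat k ^ p * wgt (shift_b a i b) Mp c N eta a' k) UNIV"
      unfolding msc_def moment_eq a'_def p_def by simp
    show "madd (mmul (moment b Mp c N eta) (mtr (LamA a))) (msc (b a i) (moment b Mp c N eta)) n m
      = msc (b a i) (moment (shift_b a i b) Mp c N eta) n m"
    proof (cases "a' = a")
      case True
      have "madd (mmul (moment b Mp c N eta) (mtr (LamA a))) (msc (b a i) (moment b Mp c N eta)) n m
        = infsum (\<lambda>k. of_nat k ^ Suc p * W a' k + b a i * (of_nat k ^ p * W a' k)) UNIV"
        unfolding lhs if_P[OF True] by (rule combine[OF summ[OF a'12] summ[OF a'12]])
      also have "\<dots> = infsum (\<lambda>k. b a i * (of_nat k ^ p * wgt (shift_b a i b) Mp c N eta a' k)) UNIV"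
      proof (intro infsum_cong)
        fix k
        have "b a i * wgt (shift_b a i b) Mp c N eta a k = (b a i + of_nat k) * W a k"
          using wgt_shift_b_same[of i Mp a b c N eta k, OF assms(2)] unfolding W_def by blast
        then have "b a i * (of_nat k ^ p * wgt (shift_b a i b) Mp c N eta a k)
           = of_nat k ^ p * ((b a i + of_nat k) * W a k)"
          by (metis mult.left_commute)
        then show "of_nat k ^ Suc p * W a' k + b a i * (of_nat k ^ p * W a' k)
          = b a i * (of_nat k ^ p * wgt (shift_b a i b) Mp c N eta a' k)"
          using True by (simp add: algebra_simps)
      qed
      also have "\<dots> = msc (b a i) (moment (shift_b a i b) Mp c N eta) n m"
        unfolding rhs by (simp add: infsum_cmult_right')
      finally show ?thesis .
    next
      case False
      show ?thesis unfolding lhs rhs using False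
        by (simp add: wgt_shift_b_other W_def)
    qed
  qed
  show "madd (mmul (moment b Mp c N eta) (mtr (mmul Lam Lam))) (msc (c j - 1) (moment b Mp c N eta))
           = msc (c j - 1) (moment b Mp (shift_c j c) N eta)"
  proof (intro ext)
    fix n m :: nat
    define a' :: nat where "a' = (if even m then 1 else 2)"
    define p where "p = n + m div 2"
    have a'12: "a' \<in> {1,2}" unfolding a'_def by simp
    have L2: "mmul Lam Lam = (\<lambda>r s. if s = r + 2 \<and> True then 1 else 0)" unfolding Lam2 by simp
    have lhs: "madd (mmul (moment b Mp c N eta) (mtr (mmul Lam Lam))) (msc (c j - 1) (moment b Mp c N eta)) n m
      = infsum (\<lambda>k. of_nat k ^ Suc p * W a' k) UNIV
        + (c j - 1) * infsum (\<lambda>k. of_nat k ^ p * W a' k) UNIV"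
      unfolding madd_def msc_def L2 mmul_shift m2
      by (simp add: moment_eq W_def a'_def p_def)
    have rhs: "msc (c j - 1) (moment b Mp (shift_c j c) N eta) n m
      = (c j - 1) * infsum (\<lambda>k. of_nat k ^ p * wgt b Mp (shift_c j c) N eta a' k) UNIV"
      unfolding msc_def moment_eq a'_def p_def by simp
    have "madd (mmul (moment b Mp c N eta) (mtr (mmul Lam Lam))) (msc (c j - 1) (moment b Mp c N eta)) n m
      = infsum (\<lambda>k. of_nat k ^ Suc p * W a' k + (c j - 1) * (of_nat k ^ p * W a' k)) UNIV"
      unfolding lhs by (rule combine[OF summ[OF a'12] summ[OF a'12]])
    also have "\<dots> = infsum (\<lambda>k. (c j - 1) * (of_nat k ^ p * wgt b Mp (shift_c j c) N eta a' k)) UNIV"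
    proof (intro infsum_cong)
      fix k
      have "(c j - 1) * wgt b Mp (shift_c j c) N eta a' k = (c j - 1 + of_nat k) * W a' k"
        using wgt_shift_c[of j N c b Mp eta a' k, OF assms(3) cj assms(5)] unfolding W_def by blast
      then show "of_nat k ^ Suc p * W a' k + (c j - 1) * (of_nat k ^ p * W a' k)
        = (c j - 1) * (of_nat k ^ p * wgt b Mp (shift_c j c) N eta a' k)"
        by (metis (no_types, lifting) distrib_left mult.left_commute mult.commute power_Suc add.commute)
    qed
    also have "\<dots> = msc (c j - 1) (moment b Mp (shift_c j c) N eta) n m"
      unfolding rhs by (simp add: infsum_cmult_right')
    finally show "madd (mmul (moment b Mp c N eta) (mtr (mmul Lam Lam))) (msc (c j - 1) (moment b Mp c N eta)) n m
      = msc (c j - 1) (moment b Mp (shift_c j c) N eta) n m" .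
  qed
qed

end
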